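(* Let $m,n\ge1$ and let $F\subseteq\{1,\dots,m\}\times\{1,\dots,n\}$ be a binary image with row sums $(r_1,\dots,r_m)$ and column sums $(c_1,\dots,c_n)$, where $r_1=n$ and $r_m=0$. Let $L_h(F)$ be the length of the horizontal boundary of $F$. Define $b_i=\#\{j:c_j\ge i\}$ and $d_i=b_i-r_i$ for $i=1,\dots,m$. Let $k$ be an integer with $2\le k\le m-1$ such that $d_k<0$ and $d_{k+1}\ge 0$, and let $\sigma=\sum_{i=1}^k d_i$. Then for all integers $t,s\ge0$, every set of indices $\{i_1<i_2<\dots<i_{2t+1}\}\subseteq\{1,2,\dots,k,m\}$ and every set of indices $\{\tilde i_1<\tilde i_2<\dots<\tilde i_{2s+1}\}\subseteq\{1,k+1,k+2,\dots,m\}$, \[ L_h(F)\ \ge\ 2n+\big(d_{i_1}-d_{i_2}+d_{i_3}-\cdots-d_{i_{2t}}+2d_{i_{2t+1}}\big)+\big(d_{\tilde i_1}-d_{\tilde i_2}+d_{\tilde i_3}-\cdots-d_{\tilde i_{2s}}+2d_{\tilde i_{2s+1}}\big)-\sigma. \]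
   Context: A binary image is a finite set $F\subseteq\mathbb Z^2$; point $(i,j)$ lies in row $i$ and column $j$. The row sum $r_i$ is the number of points of $F$ in row $i$, and the column sum $c_j$ is the number of points of $F$ in column $j$. The horizontal boundary of $F$ is the set of ordered pairs of points $((i,j),(i',j))$ of $\mathbb Z^2$ with $|i-i'|=1$, $(i,j)\in F$ and $(i',j)\notin F$; its length is the number of such pairs. *)

theory Defs
  imports Main
begin

text \<open>A binary image is a finite set of lattice points; point (i,j) is in row i, column j.\<close>

definition row_sum :: "(int \<times> int) set \<Rightarrow> int \<Rightarrow> nat" where
  "row_sum F i = card {j. (i, j) \<in> F}"

definition col_sum :: "(int \<times> int) set \<Rightarrow> int \<Rightarrow> nat" where
  "col_sum F j = card {i. (i, j) \<in> F}"

definition hboundary :: "(int \<times> int) set \<Rightarrow> ((int \<times> int) \<times> (int \<times> int)) set" where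
  "hboundary F = {((i, j), (i', j')). j' = j \<and> \<bar>i - i'\<bar> = 1 \<and> (i, j) \<in> F \<and> (i', j) \<notin> F}"

definition hboundary_length :: "(int \<times> int) set \<Rightarrow> nat" where
  "hboundary_length F = card (hboundary F)"

definition bseq :: "(int \<times> int) set \<Rightarrow> int \<Rightarrow> int \<Rightarrow> int" where
  "bseq F n i = int (card {j \<in> {1..n}. int (col_sum F j) \<ge> i})"

definition dseq :: "(int \<times> int) set \<Rightarrow> int \<Rightarrow> int \<Rightarrow> int" where
  "dseq F n i = bseq F n i - int (row_sum F i)"

definition alt_sum :: "(int \<Rightarrow> int) \<Rightarrow> int list \<Rightarrow> int" where
  "alt_sum d xs = (\<Sum>l < length xs - 1. (-1) ^ l * d (xs ! l)) + 2 * d (last xs)"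

end

theory Submission
  imports Defs
begin


fun alt' :: "(int \<Rightarrow> int) \<Rightarrow> int list \<Rightarrow> int" where
  "alt' g [] = 0"
| "alt' g [x] = 2 * g x"
| "alt' g (x # y # zs) = g x - g y + alt' g zs"

lemma alt_sum_Cons2:
  assumes "zs \<noteq> []"
  shows "alt_sum g (x # y # zs) = g x - g y + alt_sum g zs"
proof -
  have L: "length (x # y # zs) - 1 = Suc (Suc (length zs - 1))" using assms by (cases zs) auto
  have "(\<Sum>l < length (x # y # zs) - 1. (-1::int) ^ l * g ((x # y # zs) ! l))
      = g x - g y + (\<Sum>l < length zs - 1. (-1) ^ l * g (zs ! l))"
    unfolding L by (simp only: sum.lessThan_Suc_shift) simp
  moreover have "last (x # y # zs) = last zs" using assms by simp
  ultimately show ?thesis unfolding alt_sum_def by simp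
qed

lemma alt_sum_alt': "odd (length K) \<Longrightarrow> alt_sum g K = alt' g K"
proof (induction g K rule: alt'.induct)
  case (1 g) then show ?case by simp
next
  case (2 g x) then show ?case by (simp add: alt_sum_def)
next
  case (3 g x y zs)
  then have "zs \<noteq> []" by auto
  with 3 show ?case by (simp add: alt_sum_Cons2)
qed

lemma alt'_diff: "alt' (\<lambda>i. g i - h i) K = alt' g K - alt' h K"
  by (induction g K rule: alt'.induct) (auto simp: algebra_simps)

lemma alt'_cong: "(\<And>x. x \<in> set K \<Longrightarrow> g x = h x) \<Longrightarrow> alt' g K = alt' h K"
  by (induction g K rule: alt'.induct) auto

lemma alt'_weights:
  assumes "finite A" "set K \<subseteq> A"
  shows "alt' g K = (\<Sum>x\<in>A. alt' (\<lambda>i. if i = x then 1 else 0) K * g x)"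
  using assms(2)
proof (induction g K rule: alt'.induct)
  case (1 g) then show ?case by simp
next
  case (2 g x)
  have "(\<Sum>z\<in>A. alt' (\<lambda>i. if i = z then 1 else 0) [x] * g z) = (\<Sum>z\<in>A. if z = x then 2 * g z else 0)"
    by (rule sum.cong) auto
  also have "\<dots> = 2 * g x" using 2 assms(1) by (simp add: sum.delta')
  finally show ?case by simp
next
  case (3 g x y zs)
  have IH: "alt' g zs = (\<Sum>z\<in>A. alt' (\<lambda>i. if i = z then 1 else 0) zs * g z)" using 3 by auto
  have "(\<Sum>z\<in>A. alt' (\<lambda>i. if i = z then 1 else 0) (x # y # zs) * g z)
     = (\<Sum>z\<in>A. (if z = x then g z else 0)) - (\<Sum>z\<in>A. (if z = y then g z else 0))
       + (\<Sum>z\<in>A. alt' (\<lambda>i. if i = z then 1 else 0) zs * g z)"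
    unfolding sum.distrib[symmetric] sum_subtractf[symmetric] by (rule sum.cong) (auto simp: algebra_simps)
  also have "\<dots> = g x - g y + alt' g zs" using 3(2) assms(1) IH by (simp add: sum.delta')
  finally show ?case by simp
qed

definition U :: "int list \<Rightarrow> int \<Rightarrow> int" where
  "U K p = alt' (\<lambda>i. if p \<le> i then 1 else 0) K"

lemma U_props:
  assumes "sorted_wrt (<) K" "odd (length K)"
  shows "(p \<le> hd K \<longrightarrow> U K p = 2) \<and> (p \<le> last K \<longrightarrow> 1 \<le> U K p \<and> U K p \<le> 2)
       \<and> (last K < p \<longrightarrow> U K p = 0) \<and> U K (last K) = 2"
  using assms
proof (induction "\<lambda>i::int. i" K arbitrary: p rule: alt'.induct)
  case 1 then show ?case by simp
next
  case (2 x) then show ?case by (simp add: U_def)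
next
  case (3 x y zs)
  have zs: "zs \<noteq> []" using 3 by auto
  have s: "sorted_wrt (<) zs" "odd (length zs)" using 3 by auto
  have xy: "x < y" "\<forall>z\<in>set zs. y < z" using 3(2) by auto
  have hz: "y < hd zs" using xy zs by (cases zs) auto
  have lz: "y < last zs" using xy zs by simp
  have IH: "\<And>p. (p \<le> hd zs \<longrightarrow> U zs p = 2) \<and> (p \<le> last zs \<longrightarrow> 1 \<le> U zs p \<and> U zs p \<le> 2)
       \<and> (last zs < p \<longrightarrow> U zs p = 0) \<and> U zs (last zs) = 2" using 3(1) s by blast
  have U3: "\<And>p. U (x # y # zs) p = (if p \<le> x then 1 else 0) - (if p \<le> y then 1 else 0) + U zs p"
    by (simp add: U_def)
  have hzp: "p \<le> y \<Longrightarrow> U zs p = 2" using IH[of p] hz by auto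
  have L: "last (x # y # zs) = last zs" "hd (x # y # zs) = x" using zs by auto
  have UL: "U (x # y # zs) (last zs) = 2" using U3[of "last zs"] IH[of "last zs"] lz xy by auto
  show ?case
  proof (cases "p \<le> x")
    case True then show ?thesis using U3[of p] hzp xy lz UL L by auto
  next
    case nx: False
    show ?thesis
    proof (cases "p \<le> y")
      case True then show ?thesis using U3[of p] hzp nx lz UL L by auto
    next
      case False then show ?thesis using U3[of p] IH[of p] nx UL L xy by auto
    qed
  qed
qed


lemma rise1:
  fixes U :: "int \<Rightarrow> int"
  assumes "\<And>p. 0 \<le> U p \<and> U p \<le> 2" "\<And>p. U p = 0 \<longleftrightarrow> lst < p" "p \<le> q"
  shows "U q - U p \<le> 1"
proof (cases "U p = 0")
  case True
  then have "U q = 0" using assms(2)[of p] assms(2)[of q] assms(3) by auto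
  then show ?thesis using assms(1)[of p] by linarith
next
  case False then show ?thesis using assms(1)[of p] assms(1)[of q] by linarith
qed

lemma ZA:
  fixes U :: "int \<Rightarrow> int"
  assumes r: "\<And>p. 0 \<le> U p \<and> U p \<le> 2" "\<And>p. U p = 0 \<longleftrightarrow> lst < p"
    and "p \<le> p'" "q \<le> q'" "p' \<le> q'"
  shows "U p - U p' + U q' - U q \<le> 2"
proof (cases "U p' = 0")
  case True
  then have "U q' = 0" using r(2)[of p'] r(2)[of q'] assms(5) by auto
  then show ?thesis using r(1)[of p] r(1)[of q] True by linarith
next
  case False
  then have "U p' \<ge> 1" using r(1)[of p'] by linarith
  moreover have "U q' - U q \<le> 1" using rise1[OF r assms(4)] .
  ultimately show ?thesis using r(1)[of p] by linarith
qed

lemma arithA: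
 fixes UI UJ :: "int \<Rightarrow> int" and a s l k m lI lJ :: int and e :: bool
 assumes h: "2 \<le> a" "a \<le> s" "1 \<le> l" "s + l \<le> m" "2 \<le> k" "k \<le> m - 1"
 and UIr: "\<And>p. 0 \<le> UI p \<and> UI p \<le> 2" "\<And>p. UI p = 0 \<longleftrightarrow> lI < p"
 and UJr: "\<And>p. 0 \<le> UJ p \<and> UJ p \<le> 2" "\<And>p. UJ p = 0 \<longleftrightarrow> lJ < p"
 and cI: "\<And>p. k+1 \<le> p \<Longrightarrow> p \<le> m \<Longrightarrow> UI p = UI (k+1)"
 and cJ: "\<And>p. 2 \<le> p \<Longrightarrow> p \<le> k+1 \<Longrightarrow> UJ p = UJ 2"
 and lI: "lI \<le> k \<or> lI = m" "UI lI = 2"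
 and e: "e \<longleftrightarrow> lI = k"
 shows "(UI a + UJ a - max 0 (k+1-a) - (if e \<and> a \<le> k then 1 else 0))
      - (UI (a+l) + UJ (a+l) - max 0 (k+1-(a+l)) - (if e \<and> a+l \<le> k then 1 else 0))
      - ((UI s + UJ s - max 0 (k+1-s) - (if e \<and> s \<le> k then 1 else 0))
      - (UI (s+l) + UJ (s+l) - max 0 (k+1-(s+l)) - (if e \<and> s+l \<le> k then 1 else 0))) \<le> 2"
proof -
  note ZI = ZA[OF UIr] and ZJ = ZA[OF UJr] and RI = rise1[OF UIr] and RJ = rise1[OF UJr]
  have cJ': "\<And>p. 2 \<le> p \<Longrightarrow> p \<le> k+1 \<Longrightarrow> UJ p = UJ (k+1)" proof -
    fix p assume "2 \<le> p" "p \<le> k+1"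
    then show "UJ p = UJ (k+1)" using cJ[of p] cJ[of "k+1"] h(5) by simp
  qed
  have rI: "\<And>p. 0 \<le> UI p" "\<And>p. UI p \<le> 2" using UIr by auto
  have rJ: "\<And>p. 0 \<le> UJ p" "\<And>p. UJ p \<le> 2" using UJr by auto
  have m2: "lI = m \<Longrightarrow> UI (k+1) = 2" using cI[of m] lI h by simp
  have k0: "lI \<le> k \<Longrightarrow> UI (k+1) = 0" using UIr(2)[of "k+1"] by auto
  have eI: "e \<Longrightarrow> UI (k+1) = 0 \<and> (\<forall>p\<le>k. 1 \<le> UI p)"
  proof -
    assume e
    then have lk: "lI = k" using e by simp
    have "\<forall>p\<le>k. 1 \<le> UI p"
    proof (intro allI impI)
      fix p assume "p \<le> k"
      then have "UI p \<noteq> 0" using UIr(2)[of p] lk by simp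
      then show "1 \<le> UI p" using rI(1)[of p] by linarith
    qed
    then show ?thesis using UIr(2)[of "k+1"] lk by simp
  qed
  show ?thesis
  proof (cases "k+1 \<le> s")
    case s1: True
    have i3: "UI s = UI (k+1)" "UI (s+l) = UI (k+1)" using cI[of s] cI[of "s+l"] s1 h by auto
    show ?thesis
    proof (cases "k+1 \<le> a")
      case True
      have "UI a = UI (k+1)" "UI (a+l) = UI (k+1)" using cI[of a] cI[of "a+l"] True h by auto
      then show ?thesis using True s1 i3 h ZJ[of a "a+l" s "s+l"] by simp
    next
      case a1: False
      show ?thesis
      proof (cases "a + l \<le> k")
        case True
        have "UJ a = UJ (k+1)" "UJ (a+l) = UJ (k+1)" using cJ'[of a] cJ'[of "a+l"] True h by auto
        then show ?thesis using True a1 s1 i3 h RJ[of s "s+l"] rI[of a] rI[of "a+l"] by simp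
      next
        case False
        have "UJ a = UJ (k+1)" "UI (a+l) = UI (k+1)" using cJ'[of a] cI[of "a+l"] False a1 h by auto
        moreover have "UJ (k+1) - UJ (a+l) + UJ (s+l) - UJ s \<le> 2" using ZJ[of "k+1" "a+l" s "s+l"] False s1 h by simp
        moreover have "UI a - UI (k+1) - (k+1-a) - (if e then 1 else 0) \<le> 0"
        proof (cases "lI = m")
          case True then show ?thesis using m2 rI[of a] a1 by simp
        next
          case False
          then have lk: "lI \<le> k" using lI by auto
          show ?thesis
          proof (cases "a = k")
            case True
            show ?thesis
            proof (cases e)
              case True then show ?thesis using k0 lk rI[of a] \<open>a = k\<close> by simp
            next
              case False
              then have "lI < a" using e lk \<open>a = k\<close> by auto
              then have "UI a = 0" using UIr(2) by auto
              then show ?thesis using k0 lk \<open>a = k\<close> by simp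
            qed
          next
            case False then show ?thesis using k0 lk rI[of a] a1 by simp
          qed
        qed
        ultimately show ?thesis using False a1 s1 i3 h by (auto split: if_splits)
      qed
    qed
  next
    case s2: False
    show ?thesis
    proof (cases "s + l \<le> k+1")
      case True
      have "UJ a = UJ (k+1)" "UJ (a+l) = UJ (k+1)" "UJ s = UJ (k+1)" "UJ (s+l) = UJ (k+1)"
        using cJ'[of a] cJ'[of "a+l"] cJ'[of s] cJ'[of "s+l"] True h by auto
      moreover have "UI a - UI (a+l) + UI (s+l) - UI s
          + (if e \<and> a+l \<le> k \<and> \<not> s+l \<le> k then 1 else 0) \<le> 2"
      proof (cases "e \<and> a+l \<le> k \<and> \<not> s+l \<le> k")
        case True
        then have "s + l = k+1" "UI (k+1) = 0" "1 \<le> UI s" using eI \<open>s+l \<le> k+1\<close> s2 by auto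
        then show ?thesis using True rI[of a] rI[of "a+l"] by simp
      next
        case False then show ?thesis using ZI[of a "a+l" s "s+l"] h by auto
      qed
      ultimately show ?thesis using True s2 h by (auto split: if_splits)
    next
      case sl: False
      show ?thesis
      proof (cases "a + l \<le> k+1")
        case True
        have "UJ a = UJ (k+1)" "UJ (a+l) = UJ (k+1)" "UJ s = UJ (k+1)" "UI (s+l) = UI (k+1)"
          using cJ'[of a] cJ'[of "a+l"] cJ'[of s] cI[of "s+l"] True sl s2 h by auto
        moreover have "UI a - UI (a+l) + UI (k+1) - UI s
          + (if e \<and> a+l \<le> k then 1 else 0) \<le> 2"
        proof (cases "e \<and> a+l \<le> k")
          case True
          then have "UI (k+1) = 0" "1 \<le> UI s" using eI s2 by auto
          then show ?thesis using True rI[of a] rI[of "a+l"] by simp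
        next
          case False then show ?thesis using ZI[of a "a+l" s "k+1"] h True s2 by auto
        qed
        moreover have "UJ (s+l) - UJ (k+1) \<le> 1" using RJ[of "k+1" "s+l"] sl by simp
        ultimately show ?thesis using True sl s2 h by (auto split: if_splits)
      next
        case False
        have "UI a - UI s + UJ (s+l) - UJ (a+l) - (s - a) \<le> 2"
        proof (cases "a = s")
          case True then show ?thesis by simp
        next
          case False then show ?thesis using rI[of a] rI[of s] RJ[of "a+l" "s+l"] h by simp
        qed
        moreover have "UJ a = UJ (k+1)" "UJ s = UJ (k+1)" "UI (a+l) = UI (k+1)" "UI (s+l) = UI (k+1)"
          using cJ'[of a] cJ'[of s] cI[of "a+l"] cI[of "s+l"] False sl s2 h by auto
        ultimately show ?thesis using False sl s2 h by (auto split: if_splits)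
      qed
    qed
  qed
qed


lemma sum_split_ivl:
  fixes w :: "int \<Rightarrow> int"
  assumes "a \<le> b + 1" "b \<le> c"
  shows "(\<Sum>x\<in>{a..c}. w x) = (\<Sum>x\<in>{a..b}. w x) + (\<Sum>x\<in>{b+1..c}. w x)"
proof -
  have "{a..c} = {a..b} \<union> {b+1..c}" using assms by auto
  moreover have "{a..b} \<inter> {b+1..c} = {}" by auto
  ultimately show ?thesis by (simp add: sum.union_disjoint)
qed

lemma blockB:
  fixes w :: "int \<Rightarrow> int" and m :: int
  assumes A: "\<And>a s l. 2 \<le> a \<Longrightarrow> a \<le> s \<Longrightarrow> 1 \<le> l \<Longrightarrow> s + l \<le> m \<Longrightarrow>
     (\<Sum>x\<in>{a..a+l-1}. w x) - (\<Sum>x\<in>{s..s+l-1}. w x) \<le> 2"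
  shows "finite S \<Longrightarrow> S \<subseteq> {1..m-1} \<Longrightarrow> 1 \<in> S \<Longrightarrow>
    (\<Sum>x\<in>{1..int (card S)}. w x) - (\<Sum>x\<in>S. w x)
      \<le> int (card {i\<in>S. i-1 \<notin> S}) + int (card {i\<in>S. i+1 \<notin> S}) - 2"
proof (induction "card S" arbitrary: S rule: less_induct)
  case less
  note fin = less.prems(1) and sub = less.prems(2) and one = less.prems(3)
  define e where "e = Max S"
  have eS: "e \<in> S" unfolding e_def using fin one by (intro Max_in) auto
  have emax: "\<And>x. x \<in> S \<Longrightarrow> x \<le> e" unfolding e_def using fin by simp
  define Q where "Q = {x \<in> S. {x..e} \<subseteq> S}"
  have finQ: "finite Q" using fin unfolding Q_def by auto
  have eQ: "e \<in> Q" using eS unfolding Q_def by auto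
  define s0 where "s0 = Min Q"
  have s0Q: "s0 \<in> Q" using finQ eQ unfolding s0_def by (intro Min_in) auto
  have s0S: "s0 \<in> S" and s0e: "{s0..e} \<subseteq> S" using s0Q unfolding Q_def by auto
  have s0le: "s0 \<le> e" using emax s0S by auto
  have s0m: "s0 - 1 \<notin> S"
  proof
    assume "s0 - 1 \<in> S"
    then have "{s0-1..e} \<subseteq> S"
    proof (intro subsetI)
      fix x assume "s0 - 1 \<in> S" "x \<in> {s0-1..e}"
      then show "x \<in> S" using s0e by (cases "x = s0 - 1") auto
    qed
    then have "s0 - 1 \<in> Q" using \<open>s0 - 1 \<in> S\<close> unfolding Q_def by auto
    then have "Min Q \<le> s0 - 1" by (rule Min_le[OF finQ])
    then have "s0 \<le> s0 - 1" using s0_def by simp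
    then show False by simp
  qed
  have S1: "S \<subseteq> {1..e}" using sub emax by auto
  show ?case
  proof (cases "s0 = 1")
    case True
    then have Seq: "S = {1..e}" using S1 s0e by auto
    have c: "int (card S) = e" using Seq S1 one by simp
    have t: "{i\<in>S. i-1 \<notin> S} = {1}" using Seq one by auto
    have b: "{i\<in>S. i+1 \<notin> S} = {e}" using Seq eS by auto
    show ?thesis using c t b Seq by simp
  next
    case False
    have s03: "3 \<le> s0" using False s0m one S1 s0S by (smt (verit) atLeastAtMost_iff subsetD)
    define S' where "S' = {x \<in> S. x < s0}"
    have SU: "S = S' \<union> {s0..e}" using s0e emax unfolding S'_def by force
    have disj: "S' \<inter> {s0..e} = {}" unfolding S'_def by auto
    have finS': "finite S'" using fin unfolding S'_def by auto
    have S'sub: "S' \<subseteq> {1..s0-2}"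
    proof
      fix x assume "x \<in> S'"
      then have x: "x \<in> S" "x < s0" unfolding S'_def by auto
      then have "x \<noteq> s0 - 1" using s0m by auto
      then show "x \<in> {1..s0-2}" using x S1 by auto
    qed
    have one': "1 \<in> S'" using one s03 unfolding S'_def by auto
    have cardS: "card S = card S' + card {s0..e}" using SU disj finS' by (simp add: card_Un_disjoint)
    have cI: "int (card {s0..e}) = e - s0 + 1" using s0le by simp
    have lt: "card S' < card S" using cardS cI s0le by linarith
    have sub': "S' \<subseteq> {1..m-1}" using sub unfolding S'_def by auto
    have IH: "(\<Sum>x\<in>{1..int (card S')}. w x) - (\<Sum>x\<in>S'. w x)
      \<le> int (card {i\<in>S'. i-1 \<notin> S'}) + int (card {i\<in>S'. i+1 \<notin> S'}) - 2"
      using less.hyps[OF lt finS' sub' one'] .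
    have cS'le: "int (card S') \<le> s0 - 2"
    proof -
      have "card S' \<le> card {1..s0-2}" using S'sub by (intro card_mono) auto
      then show ?thesis using s03 by simp
    qed
    have cS'1: "1 \<le> int (card S')" proof -
      have "card S' > 0" using one' finS' card_gt_0_iff by blast
      then show ?thesis by linarith
    qed
    have S'iff: "\<And>x. x \<in> S' \<longleftrightarrow> x \<in> S \<and> x < s0" by (simp add: S'_def)
    have inS: "\<And>x. s0 \<le> x \<Longrightarrow> x \<le> e \<Longrightarrow> x \<in> S" using s0e by auto
    have tops: "{i\<in>S. i-1 \<notin> S} = insert s0 {i\<in>S'. i-1 \<notin> S'}"
    proof (rule set_eqI)
      fix i
      show "i \<in> {i\<in>S. i-1 \<notin> S} \<longleftrightarrow> i \<in> insert s0 {i\<in>S'. i-1 \<notin> S'}"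
      proof (cases "i < s0")
        case True then show ?thesis by (simp add: S'iff)
      next
        case False
        show ?thesis
        proof (cases "i = s0")
          case True then show ?thesis using s0S s0m by simp
        next
          case False
          then have "s0 < i" using \<open>\<not> i < s0\<close> by simp
          then show ?thesis using inS[of "i-1"] emax[of i] by (auto simp: S'iff)
        qed
      qed
    qed
    have bots: "{i\<in>S. i+1 \<notin> S} = insert e {i\<in>S'. i+1 \<notin> S'}"
    proof (rule set_eqI)
      fix i
      show "i \<in> {i\<in>S. i+1 \<notin> S} \<longleftrightarrow> i \<in> insert e {i\<in>S'. i+1 \<notin> S'}"
      proof (cases "i < s0 - 1")
        case True then show ?thesis using s0le by (simp add: S'iff)
      next
        case False
        show ?thesis
        proof (cases "i = e")
          case True then show ?thesis using eS emax[of "e+1"] s0le by (auto simp: S'iff)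
        next
          case False
          have "i = s0 - 1 \<or> (s0 \<le> i \<and> i < e) \<or> e < i" using \<open>\<not> i < s0 - 1\<close> False by auto
          then show ?thesis using inS[of "i+1"] emax[of i] s0m False by (auto simp: S'iff)
        qed
      qed
    qed
    have nt: "s0 \<notin> {i\<in>S'. i-1 \<notin> S'}" and nb: "e \<notin> {i\<in>S'. i+1 \<notin> S'}"
      using s0le unfolding S'_def by auto
    have ft: "finite {i\<in>S'. i-1 \<notin> S'}" "finite {i\<in>S'. i+1 \<notin> S'}" using finS' by auto
    have ct: "int (card {i\<in>S. i-1 \<notin> S}) = int (card {i\<in>S'. i-1 \<notin> S'}) + 1"
      using tops nt ft by simp
    have cb: "int (card {i\<in>S. i+1 \<notin> S}) = int (card {i\<in>S'. i+1 \<notin> S'}) + 1"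
      using bots nb ft by simp
    define c' where "c' = int (card S')"
    define l where "l = e - s0 + 1"
    have cS: "int (card S) = c' + l" using cardS cI unfolding c'_def l_def by simp
    have s1: "(\<Sum>x\<in>{1..int (card S)}. w x) = (\<Sum>x\<in>{1..c'}. w x) + (\<Sum>x\<in>{c'+1..c'+l}. w x)"
      using sum_split_ivl[of 1 c' "c'+l" w] cS cS'1 s0le unfolding c'_def l_def by simp
    have s2: "(\<Sum>x\<in>S. w x) = (\<Sum>x\<in>S'. w x) + (\<Sum>x\<in>{s0..s0+l-1}. w x)"
      using SU disj finS' unfolding l_def by (simp add: sum.union_disjoint)
    have AA0: "(\<Sum>x\<in>{c'+1..c'+1+l-1}. w x) - (\<Sum>x\<in>{s0..s0+l-1}. w x) \<le> 2"
      using cS'1 cS'le s0le S1 sub eS unfolding c'_def l_def by (intro A) auto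
    have eq1: "c'+1+l-1 = c'+l" by simp
    have AA: "(\<Sum>x\<in>{c'+1..c'+l}. w x) - (\<Sum>x\<in>{s0..s0+l-1}. w x) \<le> 2"
      using AA0 unfolding eq1 .
    show ?thesis using IH s1 s2 AA ct cb unfolding c'_def by linarith
  qed
qed


lemma alt'_sum_e:
  assumes "finite B"
  shows "(\<Sum>x\<in>B. alt' (\<lambda>i. if i = x then 1 else 0) K * h x) = alt' (\<lambda>i. if i \<in> B then h i else 0) K"
proof (induction K rule: induct_list012)
  case 1 then show ?case by simp
next
  case (2 x)
  have "(\<Sum>z\<in>B. alt' (\<lambda>i. if i = z then 1 else 0) [x] * h z) = (\<Sum>z\<in>B. if x = z then 2 * h z else 0)"
    by (rule sum.cong) auto
  also have "\<dots> = (if x \<in> B then 2 * h x else 0)" using assms by (simp add: sum.delta)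
  finally show ?case by simp
next
  case (3 x y zs)
  have "(\<Sum>z\<in>B. alt' (\<lambda>i. if i = z then 1 else 0) (x # y # zs) * h z)
     = (\<Sum>z\<in>B. (if x = z then h z else 0)) - (\<Sum>z\<in>B. (if y = z then h z else 0))
       + (\<Sum>z\<in>B. alt' (\<lambda>i. if i = z then 1 else 0) zs * h z)"
    unfolding sum.distrib[symmetric] sum_subtractf[symmetric] by (rule sum.cong) (auto simp: algebra_simps)
  also have "\<dots> = (if x \<in> B then h x else 0) - (if y \<in> B then h y else 0) + alt' (\<lambda>i. if i \<in> B then h i else 0) zs"
    using 3(1) assms by (simp add: sum.delta)
  finally show ?case by simp
qed

lemma U_const:
  assumes "\<And>x. x \<in> set K \<Longrightarrow> x < p \<or> q \<le> x" "p \<le> q"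
  shows "U K p = U K q"
  unfolding U_def using assms by (intro alt'_cong) force

definition Wt :: "int list \<Rightarrow> int list \<Rightarrow> int \<Rightarrow> bool \<Rightarrow> int \<Rightarrow> int" where
  "Wt I J k e x = alt' (\<lambda>i. if i = x then 1 else 0) I + alt' (\<lambda>i. if i = x then 1 else 0) J
     - (if 1 \<le> x \<and> x \<le> k then 1 else 0) - (if e \<and> x = k then 1 else 0)"

lemma card_ivl_filter:
  fixes p k m :: int
  assumes "1 \<le> p" "k \<le> m"
  shows "(\<Sum>x\<in>{p..m}. (if 1 \<le> x \<and> x \<le> k then 1 else 0 :: int)) = max 0 (k+1-p)"
proof -
  have "(\<Sum>x\<in>{p..m}. (if 1 \<le> x \<and> x \<le> k then 1 else 0 :: int)) = (\<Sum>x\<in>{p..k}. 1)"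
    using assms by (intro sum.mono_neutral_cong_right) auto
  then show ?thesis by simp
qed

lemma Phi_formula:
  assumes "set I \<subseteq> {1..m}" "set J \<subseteq> {1..m}" "k \<le> m" "1 \<le> p"
  shows "(\<Sum>x\<in>{p..m}. Wt I J k e x) = U I p + U J p - max 0 (k+1-p) - (if e \<and> p \<le> k then 1 else 0)"
proof -
  have aI: "(\<Sum>x\<in>{p..m}. alt' (\<lambda>i. if i = x then 1 else 0) I) = U I p"
  proof -
    have "(\<Sum>x\<in>{p..m}. alt' (\<lambda>i. if i = x then 1 else 0) I) = (\<Sum>x\<in>{p..m}. alt' (\<lambda>i. if i = x then 1 else 0) I * 1)" by simp
    also have "\<dots> = alt' (\<lambda>i. if i \<in> {p..m} then 1 else 0) I" by (rule alt'_sum_e) simp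
    also have "\<dots> = U I p" unfolding U_def using assms(1) by (intro alt'_cong) auto
    finally show ?thesis .
  qed
  have aJ: "(\<Sum>x\<in>{p..m}. alt' (\<lambda>i. if i = x then 1 else 0) J) = U J p"
  proof -
    have "(\<Sum>x\<in>{p..m}. alt' (\<lambda>i. if i = x then 1 else 0) J) = (\<Sum>x\<in>{p..m}. alt' (\<lambda>i. if i = x then 1 else 0) J * 1)" by simp
    also have "\<dots> = alt' (\<lambda>i. if i \<in> {p..m} then 1 else 0) J" by (rule alt'_sum_e) simp
    also have "\<dots> = U J p" unfolding U_def using assms(2) by (intro alt'_cong) auto
    finally show ?thesis .
  qed
  have ek: "(\<Sum>x\<in>{p..m}. (if e \<and> x = k then 1 else 0 :: int)) = (if e \<and> p \<le> k then 1 else 0)"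
    using assms(3) by (cases e) (simp_all add: sum.delta sum.delta')
  show ?thesis unfolding Wt_def sum.distrib sum_subtractf aI aJ ek card_ivl_filter[OF assms(4,3)] ..
qed


lemma U_basic:
  assumes "sorted_wrt (<) K" "odd (length K)"
  shows "0 \<le> U K p \<and> U K p \<le> 2" "U K p = 0 \<longleftrightarrow> last K < p" "U K (last K) = 2"
proof -
  have P: "(p \<le> last K \<longrightarrow> 1 \<le> U K p \<and> U K p \<le> 2) \<and> (last K < p \<longrightarrow> U K p = 0)"
    using U_props[OF assms, of p] by blast
  show "0 \<le> U K p \<and> U K p \<le> 2" using P by (cases "p \<le> last K") auto
  show "U K p = 0 \<longleftrightarrow> last K < p" using P by (cases "p \<le> last K") auto
  show "U K (last K) = 2" using U_props[OF assms, of p] by blast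
qed

lemma ivl_Phi:
  assumes "a \<le> b + 1" "b \<le> m"
  shows "(\<Sum>x\<in>{a..b}. w x) = (\<Sum>x\<in>{a..m}. w x) - (\<Sum>x\<in>{b+1..m}. (w::int\<Rightarrow>int) x)"
  using sum_split_ivl[OF assms, of w] by simp

lemma WtA:
  assumes sI: "sorted_wrt (<) I" "odd (length I)" "set I \<subseteq> {1..k} \<union> {m}"
    and sJ: "sorted_wrt (<) J" "odd (length J)" "set J \<subseteq> {1} \<union> {k+1..m}"
    and k: "2 \<le> k" "k \<le> m - 1" and e: "e \<longleftrightarrow> last I = k"
    and h: "2 \<le> a" "a \<le> s" "1 \<le> l" "s + l \<le> m"
  shows "(\<Sum>x\<in>{a..a+l-1}. Wt I J k e x) - (\<Sum>x\<in>{s..s+l-1}. Wt I J k e x) \<le> 2"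
proof -
  have IJ: "set I \<subseteq> {1..m}" "set J \<subseteq> {1..m}" using sI(3) sJ(3) k by auto
  define P where "P p = (\<Sum>x\<in>{p..m}. Wt I J k e x)" for p
  have Pf: "\<And>p. 1 \<le> p \<Longrightarrow> P p = U I p + U J p - max 0 (k+1-p) - (if e \<and> p \<le> k then 1 else 0)"
    unfolding P_def using IJ k by (intro Phi_formula) auto
  have i1: "(\<Sum>x\<in>{a..a+l-1}. Wt I J k e x) = P a - P (a+l)"
    using ivl_Phi[of a "a+l-1" m "Wt I J k e"] h unfolding P_def by simp
  have i2: "(\<Sum>x\<in>{s..s+l-1}. Wt I J k e x) = P s - P (s+l)"
    using ivl_Phi[of s "s+l-1" m "Wt I J k e"] h unfolding P_def by simp
  have lIin: "last I \<in> set I" using sI(2) by (cases I) auto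
  have lI: "last I \<le> k \<or> last I = m" using lIin sI(3) by auto
  have cI: "\<And>p. k+1 \<le> p \<Longrightarrow> p \<le> m \<Longrightarrow> U I p = U I (k+1)"
  proof -
    fix p assume "k+1 \<le> p" "p \<le> m"
    then show "U I p = U I (k+1)" using sI(3) by (intro U_const[symmetric]) auto
  qed
  have cJ: "\<And>p. 2 \<le> p \<Longrightarrow> p \<le> k+1 \<Longrightarrow> U J p = U J 2"
  proof -
    fix p assume "2 \<le> p" "p \<le> k+1"
    then show "U J p = U J 2" using sJ(3) by (intro U_const[symmetric]) auto
  qed
  have A: "(U I a + U J a - max 0 (k+1-a) - (if e \<and> a \<le> k then 1 else 0))
      - (U I (a+l) + U J (a+l) - max 0 (k+1-(a+l)) - (if e \<and> a+l \<le> k then 1 else 0))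
      - ((U I s + U J s - max 0 (k+1-s) - (if e \<and> s \<le> k then 1 else 0))
      - (U I (s+l) + U J (s+l) - max 0 (k+1-(s+l)) - (if e \<and> s+l \<le> k then 1 else 0))) \<le> 2"
    using arithA[where UI="U I" and UJ="U J" and lI="last I" and lJ="last J" and a=a and s=s and l=l and k=k and m=m and e=e,
        OF h k U_basic(1,2)[OF sI(1,2)] U_basic(1,2)[OF sJ(1,2)] cI cJ lI U_basic(3)[OF sI(1,2)] e] .
  have "1 \<le> a" "1 \<le> a+l" "1 \<le> s" "1 \<le> s+l" using h by auto
  note P4 = Pf[OF this(1)] Pf[OF this(2)] Pf[OF this(3)] Pf[OF this(4)]
  show ?thesis unfolding i1 i2 P4 by (rule A)
qed

lemma Wt_rep:
  assumes "set I \<subseteq> {1..m}" "set J \<subseteq> {1..m}" "1 \<le> k" "k \<le> m"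
  shows "alt' g I + alt' g J - (\<Sum>i=1..k. g i) - (if e then g k else 0) = (\<Sum>x\<in>{1..m}. Wt I J k e x * g x)"
proof -
  have aI: "(\<Sum>x\<in>{1..m}. alt' (\<lambda>i. if i = x then 1 else 0) I * g x) = alt' g I"
    using alt'_sum_e[of "{1..m}" I g] assms(1) by (simp, intro alt'_cong) auto
  have aJ: "(\<Sum>x\<in>{1..m}. alt' (\<lambda>i. if i = x then 1 else 0) J * g x) = alt' g J"
    using alt'_sum_e[of "{1..m}" J g] assms(2) by (simp, intro alt'_cong) auto
  have s1: "(\<Sum>x\<in>{1..m}. (if 1 \<le> x \<and> x \<le> k then 1 else 0) * g x) = (\<Sum>i=1..k. g i)"
    using assms(4) by (intro sum.mono_neutral_cong_right) auto
  have s2: "(\<Sum>x\<in>{1..m}. (if e \<and> x = k then 1 else 0) * g x) = (if e then g k else 0)"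
  proof -
    have "(\<Sum>x\<in>{1..m}. (if e \<and> x = k then 1 else 0) * g x) = (\<Sum>x\<in>{1..m}. if x = k then (if e then g k else 0) else 0)"
      by (rule sum.cong) auto
    then show ?thesis using assms(3,4) by (simp add: sum.delta)
  qed
  have "(\<Sum>x\<in>{1..m}. Wt I J k e x * g x) = (\<Sum>x\<in>{1..m}. alt' (\<lambda>i. if i = x then 1 else 0) I * g x)
     + (\<Sum>x\<in>{1..m}. alt' (\<lambda>i. if i = x then 1 else 0) J * g x)
     - (\<Sum>x\<in>{1..m}. (if 1 \<le> x \<and> x \<le> k then 1 else 0) * g x)
     - (\<Sum>x\<in>{1..m}. (if e \<and> x = k then 1 else 0) * g x)"
    unfolding Wt_def sum.distrib[symmetric] sum_subtractf[symmetric] by (rule sum.cong) (simp_all add: left_diff_distrib distrib_right)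
  then show ?thesis unfolding aI aJ s1 s2 by simp
qed


lemma card_by_cols:
  fixes G :: "(int \<times> int) set"
  assumes "finite G" "G \<subseteq> UNIV \<times> {1..n}"
  shows "card G = (\<Sum>j\<in>{1..n}. card {i. (i, j) \<in> G})"
proof -
  have eq: "G = prod.swap ` (SIGMA j:{1..n}. {i. (i, j) \<in> G})" using assms(2) by force
  have fin: "\<And>j. finite {i. (i, j) \<in> G}"
  proof -
    fix j
    have "{i. (i, j) \<in> G} = fst ` (G \<inter> (UNIV \<times> {j}))" by force
    then show "finite {i. (i, j) \<in> G}" using assms(1) by simp
  qed
  have "card G = card (SIGMA j:{1..n}. {i. (i, j) \<in> G})"
    by (subst eq, rule card_image) (simp add: inj_on_def)
  also have "\<dots> = (\<Sum>j\<in>{1..n}. card {i. (i, j) \<in> G})" using fin by (simp add: card_SigmaI)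
  finally show ?thesis .
qed

lemma hb_split:
  "hboundary F = (\<lambda>p. (p, (fst p + 1, snd p))) ` {p\<in>F. (fst p + 1, snd p) \<notin> F}
     \<union> (\<lambda>p. (p, (fst p - 1, snd p))) ` {p\<in>F. (fst p - 1, snd p) \<notin> F}"
proof (rule set_eqI)
  fix z :: "(int \<times> int) \<times> (int \<times> int)"
  obtain i j i' j' where z: "z = ((i, j), (i', j'))" by (metis prod.exhaust)
  have h: "z \<in> hboundary F \<longleftrightarrow> j' = j \<and> (i' = i + 1 \<or> i' = i - 1) \<and> (i, j) \<in> F \<and> (i', j) \<notin> F"
    unfolding z hboundary_def by auto
  have h1: "z \<in> (\<lambda>p. (p, (fst p + 1, snd p))) ` {p\<in>F. (fst p + 1, snd p) \<notin> F} \<longleftrightarrow>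
      j' = j \<and> i' = i + 1 \<and> (i, j) \<in> F \<and> (i', j) \<notin> F"
    unfolding z by force
  have h2: "z \<in> (\<lambda>p. (p, (fst p - 1, snd p))) ` {p\<in>F. (fst p - 1, snd p) \<notin> F} \<longleftrightarrow>
      j' = j \<and> i' = i - 1 \<and> (i, j) \<in> F \<and> (i', j) \<notin> F"
    unfolding z by force
  show "z \<in> hboundary F \<longleftrightarrow> z \<in> (\<lambda>p. (p, (fst p + 1, snd p))) ` {p\<in>F. (fst p + 1, snd p) \<notin> F}
     \<union> (\<lambda>p. (p, (fst p - 1, snd p))) ` {p\<in>F. (fst p - 1, snd p) \<notin> F}"
    unfolding Un_iff h h1 h2 by blast
qed

lemma hb_length:
  assumes "finite F" "F \<subseteq> UNIV \<times> {1..n}"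
  shows "int (hboundary_length F) = (\<Sum>j\<in>{1..n}. int (card {i. (i,j) \<in> F \<and> (i - 1, j) \<notin> F})
     + int (card {i. (i,j) \<in> F \<and> (i + 1, j) \<notin> F}))"
proof -
  let ?A1 = "{p\<in>F. (fst p + 1, snd p) \<notin> F}" and ?A2 = "{p\<in>F. (fst p - 1, snd p) \<notin> F}"
  have f1: "finite ?A1" "finite ?A2" using assms(1) by auto
  have c: "card (hboundary F) = card ?A1 + card ?A2"
    unfolding hb_split
    by (subst card_Un_disjoint) (auto simp: f1 card_image inj_on_def)
  have c1: "card ?A1 = (\<Sum>j\<in>{1..n}. card {i. (i,j) \<in> F \<and> (i + 1, j) \<notin> F})"
    using card_by_cols[of ?A1 n] f1 assms(2) by auto
  have c2: "card ?A2 = (\<Sum>j\<in>{1..n}. card {i. (i,j) \<in> F \<and> (i - 1, j) \<notin> F})"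
    using card_by_cols[of ?A2 n] f1 assms(2) by auto
  show ?thesis unfolding hboundary_length_def c c1 c2 by (simp add: sum.distrib)
qed

lemma card_as_sum:
  assumes "finite A"
  shows "int (card {j\<in>A. P j}) = (\<Sum>j\<in>A. if P j then 1 else 0)"
  using sum.inter_filter[OF assms, of "\<lambda>_. (1::int)" P] by simp



theorem theorem5p1:
  fixes F :: "(int \<times> int) set" and m n k :: int and t s :: nat
    and I J :: "int list"
  assumes "1 \<le> m" and "1 \<le> n"
    and "F \<subseteq> {1..m} \<times> {1..n}"
    and "row_sum F 1 = nat n" and "row_sum F m = 0"
    and "2 \<le> k" and "k \<le> m - 1"
    and "dseq F n k < 0" and "dseq F n (k + 1) \<ge> 0"
    and "sorted_wrt (<) I" and "length I = 2 * t + 1"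
    and "set I \<subseteq> {1..k} \<union> {m}"
    and "sorted_wrt (<) J" and "length J = 2 * s + 1"
    and "set J \<subseteq> {1} \<union> {k+1..m}"
  shows "int (hboundary_length F) \<ge>
           2 * n + alt_sum (dseq F n) I + alt_sum (dseq F n) J
             - (\<Sum>i = 1..k. dseq F n i)"
proof -
  note Fbox = assms(3)
  define e where "e = (last I = k)"
  have finF: "finite F" using Fbox by (rule finite_subset) simp
  have oddI: "odd (length I)" and oddJ: "odd (length J)" using assms(11,14) by auto
  have IJ: "set I \<subseteq> {1..m}" "set J \<subseteq> {1..m}" using assms(6,7,12,15) by auto
  define S where "S j = {i. (i, j) \<in> F}" for j
  define c where "c j = col_sum F j" for j
  have cS: "c j = card (S j)" for j unfolding c_def S_def col_sum_def by simp
  have finS: "finite (S j)" for j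
  proof -
    have "S j \<subseteq> {1..m}" using Fbox unfolding S_def by auto
    then show ?thesis by (rule finite_subset) simp
  qed
  have row1: "{j. (1, j) \<in> F} = {1..n}"
  proof (rule card_subset_eq)
    show "finite {1..n}" by simp
    show "{j. (1, j) \<in> F} \<subseteq> {1..n}" using Fbox by auto
    show "card {j. (1, j) \<in> F} = card {1..n}" using assms(4) unfolding row_sum_def by simp
  qed
  have rowm: "{j. (m, j) \<in> F} = {}"
  proof -
    have "{j. (m, j) \<in> F} \<subseteq> {1..n}" using Fbox by auto
    then have "finite {j. (m, j) \<in> F}" by (rule finite_subset) simp
    then show ?thesis using assms(5) unfolding row_sum_def by simp
  qed
  have Ssub: "S j \<subseteq> {1..m-1}" for j
  proof
    fix i assume "i \<in> S j"
    then have "(i, j) \<in> F" unfolding S_def by simp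
    moreover have "i \<noteq> m" using rowm calculation by auto
    ultimately show "i \<in> {1..m-1}" using Fbox by auto
  qed
  have S1: "1 \<in> S j" if "j \<in> {1..n}" for j using row1 that unfolding S_def by auto
  have A: "\<And>a s l. 2 \<le> a \<Longrightarrow> a \<le> s \<Longrightarrow> 1 \<le> l \<Longrightarrow> s + l \<le> m \<Longrightarrow>
     (\<Sum>x\<in>{a..a+l-1}. Wt I J k e x) - (\<Sum>x\<in>{s..s+l-1}. Wt I J k e x) \<le> 2"
    using WtA[OF assms(10) oddI assms(12) assms(13) oddJ assms(15) assms(6,7)] e_def by blast
  define tp where "tp j = int (card {i\<in>S j. i-1 \<notin> S j}) + int (card {i\<in>S j. i+1 \<notin> S j})" for j
  have col: "(\<Sum>x\<in>{1..int (c j)}. Wt I J k e x) - (\<Sum>x\<in>S j. Wt I J k e x) \<le> tp j - 2"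
    if "j \<in> {1..n}" for j
    unfolding cS tp_def using blockB[OF A, where S="S j"] finS Ssub S1[OF that] by blast
  define dl where "dl j x = (if x \<le> int (c j) then 1 else 0) - (if x \<in> S j then 1 else 0 :: int)" for j x
  have crep: "(\<Sum>x\<in>{1..m}. Wt I J k e x * dl j x) = (\<Sum>x\<in>{1..int (c j)}. Wt I J k e x) - (\<Sum>x\<in>S j. Wt I J k e x)" for j
  proof -
    have cm: "int (c j) \<le> m"
    proof -
      have "card (S j) \<le> card {1..m-1}" using Ssub finS by (intro card_mono) auto
      then show ?thesis unfolding cS using assms(1) by simp
    qed
    have "(\<Sum>x\<in>{1..m}. Wt I J k e x * dl j x) = (\<Sum>x\<in>{1..m}. (if x \<le> int (c j) then Wt I J k e x else 0))
        - (\<Sum>x\<in>{1..m}. (if x \<in> S j then Wt I J k e x else 0))"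
      unfolding dl_def sum_subtractf[symmetric] by (rule sum.cong) (auto simp: right_diff_distrib)
    also have "(\<Sum>x\<in>{1..m}. (if x \<le> int (c j) then Wt I J k e x else 0)) = (\<Sum>x\<in>{1..int (c j)}. Wt I J k e x)"
      using cm by (intro sum.mono_neutral_cong_right) auto
    also have "(\<Sum>x\<in>{1..m}. (if x \<in> S j then Wt I J k e x else 0)) = (\<Sum>x\<in>S j. Wt I J k e x)"
      using Ssub[of j] by (intro sum.mono_neutral_cong_right) auto
    finally show ?thesis .
  qed
  have drep: "dseq F n x = (\<Sum>j\<in>{1..n}. dl j x)" for x
  proof -
    have b: "bseq F n x = (\<Sum>j\<in>{1..n}. if x \<le> int (c j) then 1 else 0)"
      unfolding bseq_def c_def by (rule card_as_sum) simp
    have "{j. (x, j) \<in> F} = {j\<in>{1..n}. x \<in> S j}" using Fbox unfolding S_def by auto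
    then have r: "int (row_sum F x) = (\<Sum>j\<in>{1..n}. if x \<in> S j then 1 else 0)"
      unfolding row_sum_def using card_as_sum[of "{1..n}" "\<lambda>j. x \<in> S j"] by simp
    show ?thesis unfolding dseq_def b r dl_def sum_subtractf by simp
  qed
  have Tf: "alt' (dseq F n) I + alt' (dseq F n) J - (\<Sum>i=1..k. dseq F n i) - (if e then dseq F n k else 0)
      = (\<Sum>x\<in>{1..m}. Wt I J k e x * dseq F n x)"
    using Wt_rep[OF IJ, where k=k and e=e and g="dseq F n"] assms(6,7) by simp
  also have "\<dots> = (\<Sum>j\<in>{1..n}. \<Sum>x\<in>{1..m}. Wt I J k e x * dl j x)"
    unfolding drep sum_distrib_left by (rule sum.swap)
  also have "\<dots> \<le> (\<Sum>j\<in>{1..n}. tp j - 2)"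
    by (rule sum_mono) (simp add: crep col)
  also have "\<dots> = int (hboundary_length F) - 2 * n"
  proof -
    have "int (hboundary_length F) = (\<Sum>j\<in>{1..n}. tp j)"
    proof -
      have Fn: "F \<subseteq> UNIV \<times> {1..n}" using Fbox by auto
      show ?thesis unfolding hb_length[OF finF Fn] tp_def S_def by simp
    qed
    then show ?thesis using assms(2) by (simp add: sum_subtractf)
  qed
  finally have main: "alt' (dseq F n) I + alt' (dseq F n) J - (\<Sum>i=1..k. dseq F n i) - (if e then dseq F n k else 0)
      \<le> int (hboundary_length F) - 2 * n" .
  have "(if e then dseq F n k else 0) \<le> 0" using assms(8) by simp
  then show ?thesis using main alt_sum_alt'[OF oddI] alt_sum_alt'[OF oddJ] by simp
qed
end
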